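(* Let $\mathcal F$ be a class of functions $\mathcal X\to[0,1]$, let $r^*=r^*(\mathcal G)$ be a localization radius of $\mathcal G=\{(f-g)^2:f,g\in\mathcal F\}$, let $S'\in(\mathcal X\times[0,1])^n$ be arbitrary, let $c\in\mathcal F$, and for $\bar\gamma>0$ let $\mathcal F_c(\bar\gamma)=\{f\in\mathcal F:d_{S'}(f,c)\le\bar\gamma\}$. Then for every $\bar\gamma\ge\sqrt{r^*}$, $$\hat{\mathfrak R}_n(\ell\circ\mathcal F_c(\bar\gamma),S')\le\bar\gamma\sqrt{r^*}+\frac{24}{\sqrt n}\int_0^{\bar\gamma}\sqrt{\log\mathcal N_2(\mathcal F,\rho,S')}\,d\rho.$$
   Context: $\mathcal Z=\mathcal X\times[0,1]$; for $S=\{(x_i,y_i)\}_{i\le n}$, $d_S(f,g)=(\frac1n\sum_i(f(x_i)-g(x_i))^2)^{1/2}$ and $\mathcal N_2(\mathcal F,\rho,S)$ is the minimal size of a $\rho$-cover of $\mathcal F$ in $d_S$. $\ell\circ\mathcal H=\{(x,y)\mapsto(f(x)-y)^2:f\in\mathcal H\}$. For a class $\mathcal G$ of real functions on $\mathcal Z$ and $S=\{z_1,\dots,z_n\}\in\mathcal Z^n$, $\hat{\mathfrak R}_n(\mathcal G,S)=\mathbb E_\sigma\sup_{g\in\mathcal G}\frac1n\sum_{i=1}^n\sigma_ig(z_i)$ with $\sigma_i$ i.i.d. uniform on $\{-1,1\}$; $\mathcal G[r,S]=\{g\in\mathcal G:\frac1n\sum_{i=1}^ng(z_i)\le r\}$.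 A localization radius $r^*(\mathcal G)$ is any number that is at least the largest solution of $\phi_n(r)=r$, for some function $\phi_n:[0,\infty)\to[0,\infty)$ that is nondecreasing, such that $\phi_n(r)/\sqrt r$ is nonincreasing on $(0,\infty)$, and such that $\sup_{S\in\mathcal Z^n}\hat{\mathfrak R}_n(\mathcal G[r,S],S)\le\phi_n(r)$ for all $r>0$. *)

theory Defs
  imports "HOL-Analysis.Analysis" "HOL-Library.FuncSet"
begin

definition sample_in_Z :: "nat \<Rightarrow> ('x \<times> real) list \<Rightarrow> bool" where
  "sample_in_Z n S \<longleftrightarrow> length S = n \<and> (\<forall>z\<in>set S. snd z \<in> {0..1})"

definition emp_dist :: "('x \<times> real) list \<Rightarrow> ('x \<Rightarrow> real) \<Rightarrow> ('x \<Rightarrow> real) \<Rightarrow> real" where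
  "emp_dist S f g = sqrt ((\<Sum>i<length S. (f (fst (S!i)) - g (fst (S!i)))\<^sup>2) / length S)"

definition is_cover :: "('x \<Rightarrow> real) set \<Rightarrow> real \<Rightarrow> ('x \<times> real) list \<Rightarrow> ('x \<Rightarrow> real) set \<Rightarrow> bool" where
  "is_cover F \<rho> S C \<longleftrightarrow> (\<forall>f\<in>F. \<exists>c\<in>C. emp_dist S f c \<le> \<rho>)"

definition covering_number :: "('x \<Rightarrow> real) set \<Rightarrow> real \<Rightarrow> ('x \<times> real) list \<Rightarrow> nat" where
  "covering_number F \<rho> S = (LEAST k. \<exists>C. finite C \<and> card C = k \<and> is_cover F \<rho> S C)"

definition loss_class :: "('x \<Rightarrow> real) set \<Rightarrow> ('x \<times> real \<Rightarrow> real) set" where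
  "loss_class H = (\<lambda>f. \<lambda>(x,y). (f x - y)\<^sup>2) ` H"

definition emp_rademacher :: "('z \<Rightarrow> real) set \<Rightarrow> 'z list \<Rightarrow> real" where
  "emp_rademacher G S =
     (\<Sum>\<sigma>\<in>({..<length S} \<rightarrow>\<^sub>E {-1::real, 1}).
        (SUP g\<in>G. (\<Sum>i<length S. \<sigma> i * g (S!i)) / length S)) / 2 ^ length S"

definition loc_class :: "('z \<Rightarrow> real) set \<Rightarrow> real \<Rightarrow> 'z list \<Rightarrow> ('z \<Rightarrow> real) set" where
  "loc_class G r S = {g\<in>G. (\<Sum>i<length S. g (S!i)) / length S \<le> r}"

definition loc_radius :: "nat \<Rightarrow> ('x \<times> real \<Rightarrow> real) set \<Rightarrow> real \<Rightarrow> bool" where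
  "loc_radius n G rs \<longleftrightarrow> (\<exists>\<phi>::real \<Rightarrow> real.
      (\<forall>r\<ge>0. \<phi> r \<ge> 0) \<and>
      mono_on {0..} \<phi> \<and>
      (\<forall>r1 r2. 0 < r1 \<longrightarrow> r1 \<le> r2 \<longrightarrow> \<phi> r2 / sqrt r2 \<le> \<phi> r1 / sqrt r1) \<and>
      (\<forall>r>0. \<forall>S. sample_in_Z n S \<longrightarrow> emp_rademacher (loc_class G r S) S \<le> \<phi> r) \<and>
      (\<exists>r0\<ge>0. \<phi> r0 = r0 \<and> (\<forall>r\<ge>0. \<phi> r = r \<longrightarrow> r \<le> r0) \<and> r0 \<le> rs))"

end

theory Submission
  imports Defs "HOL-Probability.Hoeffding"
begin


lemma cosh_le_exp_sq_nonneg: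
  fixes x :: real assumes "x \<ge> 0"
  shows "(exp x + exp (-x)) / 2 \<le> exp (x\<^sup>2 / 2)"
proof -
  define c where "c = exp x + exp (-x)"
  have pos: "c > 0" unfolding c_def by (simp add: add_pos_pos)
  have h1: "-(2*x) * (1/2) + ln (1 + (1/2) * (exp (2*x) - 1)) \<le> (2*x)\<^sup>2 / 8"
    using Hoeffdings_lemma_aux[of "2*x" "1/2"] assms by simp
  have h2: "1 + (1/2) * (exp (2*x) - 1) = exp x * (c / 2)"
    unfolding c_def by (simp add: field_simps exp_minus flip: exp_add)
  have h3: "ln (exp x * (c / 2)) = x + ln (c / 2)"
    by (subst ln_mult) (use pos in auto)
  have h4: "ln (1 + (1/2) * (exp (2*x) - 1)) = x + ln (c / 2)"
    by (simp only: h2 h3)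
  have "-(2*x) * (1/2) + (x + ln (c / 2)) \<le> (2*x)\<^sup>2 / 8" using h1 h4 by simp
  moreover have "(2*x)\<^sup>2 / 8 = x\<^sup>2 / 2" by (simp add: power2_eq_square)
  ultimately have "ln ((exp x + exp (-x)) / 2) \<le> x\<^sup>2 / 2" unfolding c_def by simp
  hence "exp (ln ((exp x + exp (-x)) / 2)) \<le> exp (x\<^sup>2 / 2)" by simp
  moreover have "exp (ln ((exp x + exp (-x)) / 2)) = (exp x + exp (-x)) / 2"
    by (intro exp_ln) (auto intro: add_pos_pos)
  ultimately show ?thesis by simp
qed

lemma cosh_le_exp_sq:
  fixes x :: real
  shows "(exp x + exp (-x)) / 2 \<le> exp (x\<^sup>2 / 2)"
proof (cases "x \<ge> 0")
  case True thus ?thesis by (rule cosh_le_exp_sq_nonneg)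
next
  case False
  have "(exp (-x) + exp (-(-x))) / 2 \<le> exp ((-x)\<^sup>2 / 2)"
    using False by (intro cosh_le_exp_sq_nonneg) auto
  thus ?thesis by (simp add: add.commute)
qed



lemma opt_lambda:
  fixes x a b :: real
  assumes "a \<ge> 0" "b \<ge> 0" "\<And>l. l > 0 \<Longrightarrow> x \<le> a / l + l * b"
  shows "x \<le> 2 * sqrt (a * b)"
proof (cases "a > 0 \<and> b > 0")
  case True
  define l where "l = sqrt (a / b)"
  have lp: "l > 0" using True by (simp add: l_def)
  have "a / l = sqrt (a * b)" using True unfolding l_def
    by (simp add: real_sqrt_divide field_simps real_sqrt_mult)
  moreover have "l * b = sqrt (a * b)" using True unfolding l_def
    by (simp add: real_sqrt_divide field_simps real_sqrt_mult)
  ultimately show ?thesis using assms(3)[OF lp] by simp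
next
  case False
  hence ab: "a * b = 0" using assms by auto
  show ?thesis
  proof (rule ccontr)
    assume "\<not> ?thesis"
    hence xp: "x > 0" using ab by simp
    show False
    proof (cases "a = 0")
      case True
      have "x \<le> (x / (2 * b + 1)) * b" using assms(3)[of "x / (2*b+1)"] xp assms True by simp
      also have "\<dots> < x" using xp assms(2) by (auto simp: field_simps intro!: add_pos_nonneg)
      finally show False by simp
    next
      case False
      hence b0: "b = 0" using ab by simp
      have ap: "a > 0" using False assms by simp
      have "x \<le> a / (2 * a / x)" using assms(3)[of "2*a/x"] xp ap b0 by simp
      also have "\<dots> = x / 2" using ap xp by (simp add: field_simps)
      finally show False using xp by simp
    qed
  qed
qed

lemma card_signs: "card ({..<(n::nat)} \<rightarrow>\<^sub>E {-1::real, 1}) = 2 ^ n"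
  by (simp add: card_PiE numeral_2_eq_2)
lemma prod_if_single:
  assumes "i < (n::nat)"
  shows "(\<Prod>k<n. if k = i then f k else (1::real)) = f i"
  using assms by (simp add: prod.If_cases)

lemma sigma_sum_zero:
  assumes "i < (n::nat)"
  shows "(\<Sum>\<sigma>\<in>{..<n} \<rightarrow>\<^sub>E {-1::real, 1}. \<sigma> i) = 0"
proof -
  have "(\<Sum>\<sigma>\<in>{..<n} \<rightarrow>\<^sub>E {-1::real, 1}. \<sigma> i)
      = (\<Sum>\<sigma>\<in>{..<n} \<rightarrow>\<^sub>E {-1::real, 1}. \<Prod>k<n. (if k = i then \<sigma> k else 1))"
    using assms by (intro sum.cong refl) (simp add: prod_if_single)
  also have "\<dots> = (\<Prod>k<n. \<Sum>s\<in>{-1::real,1}. (if k = i then s else 1))"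
    by (subst prod_sum_PiE) auto
  also have "\<dots> = 0" using assms by (intro prod_zero) auto
  finally show ?thesis .
qed

lemma sigma_exp_bound:
  fixes l :: "nat \<Rightarrow> real" and n :: nat
  shows "(\<Sum>\<sigma>\<in>{..<n} \<rightarrow>\<^sub>E {-1::real, 1}. exp (t * (\<Sum>i<n. \<sigma> i * l i))) / 2 ^ n
         \<le> exp (t\<^sup>2 * (\<Sum>i<n. (l i)\<^sup>2) / 2)"
proof -
  have "(\<Sum>\<sigma>\<in>{..<n} \<rightarrow>\<^sub>E {-1::real, 1}. exp (t * (\<Sum>i<n. \<sigma> i * l i)))
      = (\<Sum>\<sigma>\<in>{..<n} \<rightarrow>\<^sub>E {-1::real, 1}. \<Prod>i<n. exp (t * \<sigma> i * l i))"
    by (intro sum.cong refl) (simp add: sum_distrib_left exp_sum mult.assoc)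
  also have "\<dots> = (\<Prod>i<n. \<Sum>s\<in>{-1::real,1}. exp (t * s * l i))"
    by (subst prod_sum_PiE) auto
  also have "\<dots> = (\<Prod>i<n. exp (t * l i) + exp (- (t * l i)))"
    by (intro prod.cong refl) (simp add: add.commute)
  finally have eq: "(\<Sum>\<sigma>\<in>{..<n} \<rightarrow>\<^sub>E {-1::real, 1}. exp (t * (\<Sum>i<n. \<sigma> i * l i))) / 2 ^ n
      = (\<Prod>i<n. (exp (t * l i) + exp (- (t * l i))) / 2)"
    by (simp add: prod_dividef)
  also have "\<dots> \<le> (\<Prod>i<n. exp ((t * l i)\<^sup>2 / 2))"
    by (intro prod_mono conjI cosh_le_exp_sq) (auto intro: add_nonneg_nonneg)
  also have "\<dots> = exp (\<Sum>i<n. (t * l i)\<^sup>2 / 2)" by (simp add: exp_sum)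
  also have "(\<Sum>i<n. (t * l i)\<^sup>2 / 2) = t\<^sup>2 * (\<Sum>i<n. (l i)\<^sup>2) / 2"
    by (simp add: sum_distrib_left sum_divide_distrib power_mult_distrib)
  finally show ?thesis .
qed



lemma massart_lambda:
  fixes L :: "(nat \<Rightarrow> real) set" and n :: nat and B t :: real
  assumes L: "finite L" "L \<noteq> {}" and B: "\<And>l. l \<in> L \<Longrightarrow> (\<Sum>i<n. (l i)\<^sup>2) \<le> B\<^sup>2"
    and t: "t > 0"
  shows "(\<Sum>\<sigma>\<in>{..<n} \<rightarrow>\<^sub>E {-1::real, 1}. Max ((\<lambda>l. \<Sum>i<n. \<sigma> i * l i) ` L)) / 2 ^ n
         \<le> ln (card L) / t + t * B\<^sup>2 / 2"
proof -
  define P where "P = {..<n} \<rightarrow>\<^sub>E {-1::real, 1}"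
  define X where "X = (\<lambda>\<sigma>. Max ((\<lambda>l. \<Sum>i<n. \<sigma> i * l i) ` L))"
  define Z where "Z = (\<Sum>\<sigma>\<in>P. exp (t * X \<sigma>)) / 2 ^ n"
  have Pfin: "finite P" unfolding P_def by (intro finite_PiE) auto
  have cardP: "real (card P) = 2 ^ n" unfolding P_def by (simp add: card_signs)
  have Pne: "P \<noteq> {}" using cardP by auto
  have Spos: "(\<Sum>\<sigma>\<in>P. exp (t * X \<sigma>)) > 0" using Pfin Pne by (intro sum_pos) auto
  have Zpos: "Z > 0" unfolding Z_def using Spos by simp
  have "(\<Sum>\<sigma>\<in>P. t * X \<sigma> - ln Z) \<le> (\<Sum>\<sigma>\<in>P. exp (t * X \<sigma>) / Z - 1)"
  proof (intro sum_mono)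
    fix \<sigma> assume "\<sigma> \<in> P"
    have "ln (exp (t * X \<sigma>) / Z) \<le> exp (t * X \<sigma>) / Z - 1"
      using Zpos by (intro ln_le_minus_one) auto
    moreover have "ln (exp (t * X \<sigma>) / Z) = t * X \<sigma> - ln Z"
      using Zpos by (simp add: ln_div)
    ultimately show "t * X \<sigma> - ln Z \<le> exp (t * X \<sigma>) / Z - 1" by simp
  qed
  also have "\<dots> = (\<Sum>\<sigma>\<in>P. exp (t * X \<sigma>)) / Z - 2 ^ n"
    using cardP by (simp add: sum_subtractf sum_divide_distrib)
  also have "\<dots> = 0" using Spos unfolding Z_def by simp
  finally have "t * (\<Sum>\<sigma>\<in>P. X \<sigma>) - 2 ^ n * ln Z \<le> 0"
    using cardP by (simp add: sum_subtractf sum_distrib_left)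
  hence 1: "t * ((\<Sum>\<sigma>\<in>P. X \<sigma>) / 2 ^ n) \<le> ln Z"
    by (simp add: field_simps)
  have "Z \<le> (\<Sum>l\<in>L. (\<Sum>\<sigma>\<in>P. exp (t * (\<Sum>i<n. \<sigma> i * l i))) / 2 ^ n)"
  proof -
    have "(\<Sum>\<sigma>\<in>P. exp (t * X \<sigma>)) \<le> (\<Sum>\<sigma>\<in>P. \<Sum>l\<in>L. exp (t * (\<Sum>i<n. \<sigma> i * l i)))"
    proof (intro sum_mono)
      fix \<sigma> assume "\<sigma> \<in> P"
      have "X \<sigma> \<in> (\<lambda>l. \<Sum>i<n. \<sigma> i * l i) ` L" unfolding X_def using L by (intro Max_in) auto
      then obtain l0 where l0: "l0 \<in> L" "X \<sigma> = (\<Sum>i<n. \<sigma> i * l0 i)" by auto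
      show "exp (t * X \<sigma>) \<le> (\<Sum>l\<in>L. exp (t * (\<Sum>i<n. \<sigma> i * l i)))"
        unfolding l0(2) using L l0(1)
        by (intro member_le_sum[where f = "\<lambda>l. exp (t * (\<Sum>i<n. \<sigma> i * l i))"]) auto
    qed
    hence "(\<Sum>\<sigma>\<in>P. exp (t * X \<sigma>)) / 2 ^ n \<le> (\<Sum>\<sigma>\<in>P. \<Sum>l\<in>L. exp (t * (\<Sum>i<n. \<sigma> i * l i))) / 2 ^ n"
      by (simp add: divide_right_mono)
    also have "\<dots> = (\<Sum>l\<in>L. \<Sum>\<sigma>\<in>P. exp (t * (\<Sum>i<n. \<sigma> i * l i))) / 2 ^ n"
      by (rule arg_cong[where f="\<lambda>x. x / 2 ^ n"], rule sum.swap)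
    also have "\<dots> = (\<Sum>l\<in>L. (\<Sum>\<sigma>\<in>P. exp (t * (\<Sum>i<n. \<sigma> i * l i))) / 2 ^ n)"
      by (simp add: sum_divide_distrib)
    finally show ?thesis unfolding Z_def .
  qed
  also have "\<dots> \<le> (\<Sum>l\<in>L. exp (t\<^sup>2 * B\<^sup>2 / 2))"
  proof (intro sum_mono)
    fix l assume l: "l \<in> L"
    have "(\<Sum>\<sigma>\<in>P. exp (t * (\<Sum>i<n. \<sigma> i * l i))) / 2 ^ n \<le> exp (t\<^sup>2 * (\<Sum>i<n. (l i)\<^sup>2) / 2)"
      unfolding P_def by (rule sigma_exp_bound)
    also have "\<dots> \<le> exp (t\<^sup>2 * B\<^sup>2 / 2)"
      using B[OF l] by (simp add: mult_left_mono)
    finally show "(\<Sum>\<sigma>\<in>P. exp (t * (\<Sum>i<n. \<sigma> i * l i))) / 2 ^ n \<le> exp (t\<^sup>2 * B\<^sup>2 / 2)" .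
  qed
  also have "\<dots> = card L * exp (t\<^sup>2 * B\<^sup>2 / 2)" by simp
  finally have "Z \<le> card L * exp (t\<^sup>2 * B\<^sup>2 / 2)" .
  hence "ln Z \<le> ln (card L * exp (t\<^sup>2 * B\<^sup>2 / 2))" using Zpos by simp
  also have "\<dots> = ln (card L) + t\<^sup>2 * B\<^sup>2 / 2"
    using L by (simp add: ln_mult card_gt_0_iff)
  finally have "t * ((\<Sum>\<sigma>\<in>P. X \<sigma>) / 2 ^ n) \<le> ln (card L) + t\<^sup>2 * B\<^sup>2 / 2" using 1 by simp
  hence "(\<Sum>\<sigma>\<in>P. X \<sigma>) / 2 ^ n \<le> (ln (card L) + t\<^sup>2 * B\<^sup>2 / 2) / t"
    using t by (simp add: field_simps)
  also have "\<dots> = ln (card L) / t + t * B\<^sup>2 / 2" using t by (simp add: field_simps power2_eq_square)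
  finally show ?thesis unfolding P_def X_def .
qed

lemma massart:
  fixes L :: "(nat \<Rightarrow> real) set" and n :: nat and B :: real
  assumes L: "finite L" "L \<noteq> {}" and B: "B \<ge> 0" "\<And>l. l \<in> L \<Longrightarrow> (\<Sum>i<n. (l i)\<^sup>2) \<le> B\<^sup>2"
  shows "(\<Sum>\<sigma>\<in>{..<n} \<rightarrow>\<^sub>E {-1::real, 1}. Max ((\<lambda>l. \<Sum>i<n. \<sigma> i * l i) ` L)) / 2 ^ n
         \<le> B * sqrt (2 * ln (card L))"
proof -
  have c1: "card L \<ge> 1" using L by (simp add: Suc_le_eq card_gt_0_iff)
  have "(\<Sum>\<sigma>\<in>{..<n} \<rightarrow>\<^sub>E {-1::real, 1}. Max ((\<lambda>l. \<Sum>i<n. \<sigma> i * l i) ` L)) / 2 ^ n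
         \<le> 2 * sqrt (ln (card L) * (B\<^sup>2 / 2))"
  proof (rule opt_lambda)
    show "0 \<le> ln (real (card L))" using c1 by simp
    show "0 \<le> B\<^sup>2 / 2" by simp
    fix t :: real assume t: "t > 0"
    have "(\<Sum>\<sigma>\<in>{..<n} \<rightarrow>\<^sub>E {-1::real, 1}. Max ((\<lambda>l. \<Sum>i<n. \<sigma> i * l i) ` L)) / 2 ^ n
         \<le> ln (card L) / t + t * B\<^sup>2 / 2" by (rule massart_lambda[OF L B(2) t])
    thus "(\<Sum>\<sigma>\<in>{..<n} \<rightarrow>\<^sub>E {-1::real, 1}. Max ((\<lambda>l. \<Sum>i<n. \<sigma> i * l i) ` L)) / 2 ^ n
         \<le> ln (card L) / t + t * (B\<^sup>2 / 2)" by simp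
  qed
  also have "2 * sqrt (ln (card L) * (B\<^sup>2 / 2)) = sqrt (2\<^sup>2 * (ln (card L) * (B\<^sup>2 / 2)))"
    by (simp only: real_sqrt_mult real_sqrt_abs)
  also have "2\<^sup>2 * (ln (card L) * (B\<^sup>2 / 2)) = B\<^sup>2 * (2 * ln (card L))" by (simp add: power2_eq_square)
  also have "sqrt \<dots> = B * sqrt (2 * ln (card L))" using B(1) by (simp only: real_sqrt_mult real_sqrt_abs)
  finally show ?thesis .
qed



lemma sq_split: "((x::real) + y)\<^sup>2 \<le> 3 * x\<^sup>2 + 3/2 * y\<^sup>2"
proof -
  have "0 \<le> 2 * (x - y/2)\<^sup>2" by simp
  thus ?thesis by (simp add: power2_eq_square algebra_simps)
qed

lemma sign_prod_le:
  fixes s w e :: real assumes "s \<in> {-1,1}" "e > 0"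
  shows "s * w \<le> w\<^sup>2 / (2*e) + e / 2"
proof -
  have "0 \<le> (w - s * e)\<^sup>2" by simp
  also have "(w - s * e)\<^sup>2 = w\<^sup>2 - 2 * e * (s * w) + e\<^sup>2" using assms(1)
    by (auto simp: power2_eq_square algebra_simps)
  finally have "2 * e * (s * w) \<le> w\<^sup>2 + e\<^sup>2" by simp
  hence "s * w \<le> (w\<^sup>2 + e\<^sup>2) / (2 * e)" using assms(2) by (simp add: field_simps)
  also have "\<dots> = w\<^sup>2 / (2*e) + e / 2" using assms(2) by (simp add: field_simps power2_eq_square)
  finally show ?thesis .
qed

lemma residual_bound:
  fixes \<sigma> w :: "nat \<Rightarrow> real" and e :: real and n :: nat
  assumes "\<And>i. i < n \<Longrightarrow> \<sigma> i \<in> {-1,1}" "e > 0" "(\<Sum>i<n. (w i)\<^sup>2) \<le> n * e\<^sup>2"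
  shows "(\<Sum>i<n. \<sigma> i * w i) \<le> n * e"
proof -
  have "(\<Sum>i<n. \<sigma> i * w i) \<le> (\<Sum>i<n. (w i)\<^sup>2 / (2*e) + e / 2)"
    using assms by (intro sum_mono sign_prod_le) auto
  also have "\<dots> = (\<Sum>i<n. (w i)\<^sup>2) / (2*e) + n * e / 2"
    by (simp add: sum.distrib sum_divide_distrib)
  also have "\<dots> \<le> n * e\<^sup>2 / (2*e) + n * e / 2"
    using assms by (intro add_right_mono divide_right_mono) auto
  also have "\<dots> = n * e" using assms(2) by (simp add: field_simps power2_eq_square)
  finally show ?thesis .
qed



lemma sqrt_div_helper: "0 < (m::real) \<Longrightarrow> sqrt m * x / m = x / sqrt m"
proof -
  assume m: "0 < m"
  have s: "sqrt m * sqrt m = m" using m by simp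
  have "sqrt m > 0" using m by simp
  thus ?thesis by (metis s nonzero_mult_div_cancel_left times_divide_eq_right divide_divide_eq_left less_irrefl)
qed

lemma chaining:
  fixes A :: "'a set" and v :: "'a \<Rightarrow> nat \<Rightarrow> real" and C :: "nat \<Rightarrow> (nat \<Rightarrow> real) set"
    and D :: real and t0 :: "nat \<Rightarrow> real" and n K :: nat
  assumes n: "n > 0" and A: "A \<noteq> {}" and D: "D > 0" and C0: "C 0 = {t0}"
    and Cfin: "\<And>j. finite (C j)"
    and cov: "\<And>j a. a \<in> A \<Longrightarrow> \<exists>c\<in>C j. (\<Sum>i<n. (v a i - c i)\<^sup>2) \<le> n * (D / 2 ^ j)\<^sup>2"
  shows "(\<Sum>\<sigma>\<in>{..<n} \<rightarrow>\<^sub>E {-1::real, 1}. (SUP a\<in>A. (\<Sum>i<n. \<sigma> i * v a i) / n)) / 2 ^ n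
     \<le> D / 2 ^ K + (\<Sum>j<K. 3 * (D / 2 ^ Suc j) * sqrt (2 * ln (real (card (C (Suc j)) * card (C j)))) / sqrt n)"
proof -
  define PS where "PS = {..<n} \<rightarrow>\<^sub>E {-1::real, 1}"
  define P where "P = (\<lambda>j a. SOME c. c \<in> C j \<and> (\<Sum>i<n. (v a i - c i)\<^sup>2) \<le> n * (D / 2 ^ j)\<^sup>2)"
  have Pp: "P j a \<in> C j \<and> (\<Sum>i<n. (v a i - P j a i)\<^sup>2) \<le> n * (D / 2 ^ j)\<^sup>2" if "a \<in> A" for j a
  proof -
    have ex: "\<exists>c. c \<in> C j \<and> (\<Sum>i<n. (v a i - c i)\<^sup>2) \<le> n * (D / 2 ^ j)\<^sup>2"
      using cov[OF that, of j] by blast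
    show ?thesis unfolding P_def by (rule someI_ex[OF ex])
  qed
  have P0: "P 0 a = t0" if "a \<in> A" for a using Pp[OF that, of 0] C0 by auto
  define L where "L = (\<lambda>j. (\<lambda>a i. P (Suc j) a i - P j a i) ` A)"
  have Lsub: "L j \<subseteq> (\<lambda>(p, q) i. p i - q i) ` (C (Suc j) \<times> C j)" for j
  proof
    fix l assume "l \<in> L j"
    then obtain a where a: "a \<in> A" and l: "l = (\<lambda>i. P (Suc j) a i - P j a i)"
      unfolding L_def by blast
    have "(P (Suc j) a, P j a) \<in> C (Suc j) \<times> C j" using Pp[OF a] by blast
    moreover have "l = (\<lambda>(p, q) i. p i - q i) (P (Suc j) a, P j a)" using l by simp
    ultimately show "l \<in> (\<lambda>(p, q) i. p i - q i) ` (C (Suc j) \<times> C j)" by (rule rev_image_eqI)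
  qed
  have Lfin: "finite (L j)" for j
    using Lsub by (rule finite_subset) (use Cfin in auto)
  have Lne: "L j \<noteq> {}" for j unfolding L_def using A by auto
  have Lcard: "card (L j) \<le> card (C (Suc j)) * card (C j)" for j
  proof -
    have "card (L j) \<le> card ((\<lambda>(p, q) i. p i - q i) ` (C (Suc j) \<times> C j))"
      by (rule card_mono[OF _ Lsub]) (use Cfin in auto)
    also have "\<dots> \<le> card (C (Suc j) \<times> C j)" by (rule card_image_le) (use Cfin in auto)
    also have "\<dots> = card (C (Suc j)) * card (C j)" by (simp add: card_cartesian_product)
    finally show ?thesis .
  qed
  have Lcard1: "card (L j) \<ge> 1" for j using Lfin Lne by (simp add: Suc_le_eq card_gt_0_iff)
  have Lnorm: "(\<Sum>i<n. (l i)\<^sup>2) \<le> (sqrt n * (3 * (D / 2 ^ Suc j)))\<^sup>2" if lL: "l \<in> L j" for l j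
  proof -
    obtain a where a: "a \<in> A" "l = (\<lambda>i. P (Suc j) a i - P j a i)" using lL unfolding L_def by blast
    define e where "e = D / 2 ^ Suc j"
    have e2: "D / 2 ^ j = 2 * e" unfolding e_def by simp
    have "(\<Sum>i<n. (l i)\<^sup>2) = (\<Sum>i<n. ((P (Suc j) a i - v a i) + (v a i - P j a i))\<^sup>2)"
      unfolding a(2) by simp
    also have "\<dots> \<le> (\<Sum>i<n. 3 * (P (Suc j) a i - v a i)\<^sup>2 + 3/2 * (v a i - P j a i)\<^sup>2)"
      by (intro sum_mono sq_split)
    also have "\<dots> = 3 * (\<Sum>i<n. (v a i - P (Suc j) a i)\<^sup>2) + 3/2 * (\<Sum>i<n. (v a i - P j a i)\<^sup>2)"
      by (simp add: sum.distrib sum_distrib_left power2_commute)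
    also have "\<dots> \<le> 3 * (n * e\<^sup>2) + 3/2 * (n * (2 * e)\<^sup>2)"
      using Pp[OF a(1), of "Suc j"] Pp[OF a(1), of j] unfolding e_def[symmetric] e2
      by (intro add_mono mult_left_mono) (auto simp: e_def)
    also have "\<dots> = (sqrt n * (3 * e))\<^sup>2" by (simp add: power2_eq_square algebra_simps)
    finally show ?thesis unfolding e_def .
  qed
  define M where "M = (\<lambda>j \<sigma>. Max ((\<lambda>l. \<Sum>i<n. \<sigma> i * l i) ` L j))"
  have Mavg: "(\<Sum>\<sigma>\<in>PS. M j \<sigma>) / 2 ^ n \<le> sqrt n * (3 * (D / 2 ^ Suc j)) * sqrt (2 * ln (card (L j)))" for j
    unfolding M_def PS_def using D
    by (intro massart Lfin Lne Lnorm) auto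
  have Mge: "(\<Sum>i<n. \<sigma> i * (P (Suc j) a i - P j a i)) \<le> M j \<sigma>" if "a \<in> A" for a j \<sigma>
    unfolding M_def using Lfin that
    by (intro Max_ge) (auto simp: L_def)
  define eK where "eK = D / 2 ^ K"
  have eK: "eK > 0" unfolding eK_def using D by simp
  have pw: "(\<Sum>i<n. \<sigma> i * v a i) \<le> (\<Sum>i<n. \<sigma> i * t0 i) + (\<Sum>j<K. M j \<sigma>) + n * eK"
    if s: "\<sigma> \<in> PS" and a: "a \<in> A" for \<sigma> a
  proof -
    have tel: "v a i = t0 i + (\<Sum>j<K. P (Suc j) a i - P j a i) + (v a i - P K a i)" for i
      using P0[OF a] sum_lessThan_telescope[of "\<lambda>j. P j a i" K] by simp
    have "(\<Sum>i<n. \<sigma> i * v a i) = (\<Sum>i<n. \<sigma> i * t0 i) + (\<Sum>i<n. \<Sum>j<K. \<sigma> i * (P (Suc j) a i - P j a i))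
          + (\<Sum>i<n. \<sigma> i * (v a i - P K a i))"
    proof -
      have "\<sigma> i * v a i = \<sigma> i * t0 i + (\<Sum>j<K. \<sigma> i * (P (Suc j) a i - P j a i)) + \<sigma> i * (v a i - P K a i)" for i
      proof -
        have "\<sigma> i * v a i = \<sigma> i * (t0 i + (\<Sum>j<K. P (Suc j) a i - P j a i) + (v a i - P K a i))"
          by (rule arg_cong[where f="\<lambda>x. \<sigma> i * x"], rule tel)
        also have "\<dots> = \<sigma> i * t0 i + (\<Sum>j<K. \<sigma> i * (P (Suc j) a i - P j a i)) + \<sigma> i * (v a i - P K a i)"
          by (simp only: distrib_left sum_distrib_left)
        finally show ?thesis .
      qed
      hence "(\<Sum>i<n. \<sigma> i * v a i) = (\<Sum>i<n. \<sigma> i * t0 i + (\<Sum>j<K. \<sigma> i * (P (Suc j) a i - P j a i)) + \<sigma> i * (v a i - P K a i))"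
        by (intro sum.cong refl) 
      thus ?thesis by (simp only: sum.distrib)
    qed
    also have "(\<Sum>i<n. \<Sum>j<K. \<sigma> i * (P (Suc j) a i - P j a i)) = (\<Sum>j<K. \<Sum>i<n. \<sigma> i * (P (Suc j) a i - P j a i))"
      by (rule sum.swap)
    also have "\<dots> \<le> (\<Sum>j<K. M j \<sigma>)" by (intro sum_mono Mge a)
    also have "(\<Sum>i<n. \<sigma> i * (v a i - P K a i)) \<le> n * eK"
      using s Pp[OF a, of K] eK unfolding PS_def eK_def
      by (intro residual_bound) (auto simp: PiE_iff)
    finally show ?thesis by simp
  qed
  have sup: "(SUP a\<in>A. (\<Sum>i<n. \<sigma> i * v a i) / n) \<le> ((\<Sum>i<n. \<sigma> i * t0 i) + (\<Sum>j<K. M j \<sigma>) + n * eK) / n"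
    if s: "\<sigma> \<in> PS" for \<sigma>
    using A pw[OF s] n by (intro cSUP_least) (auto intro: divide_right_mono)
  have PSfin: "finite PS" unfolding PS_def by (intro finite_PiE) auto
  have zero: "(\<Sum>\<sigma>\<in>PS. \<Sum>i<n. \<sigma> i * t0 i) = 0"
  proof -
    have "(\<Sum>\<sigma>\<in>PS. \<Sum>i<n. \<sigma> i * t0 i) = (\<Sum>i<n. t0 i * (\<Sum>\<sigma>\<in>PS. \<sigma> i))"
      by (subst sum.swap) (simp add: sum_distrib_left mult.commute)
    also have "\<dots> = 0" unfolding PS_def by (intro sum.neutral) (simp add: sigma_sum_zero)
    finally show ?thesis .
  qed
  have sw: "(\<Sum>\<sigma>\<in>PS. \<Sum>j<K. M j \<sigma>) = (\<Sum>j<K. \<Sum>\<sigma>\<in>PS. M j \<sigma>)"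
    by (rule sum.swap)
  have "(\<Sum>\<sigma>\<in>PS. (SUP a\<in>A. (\<Sum>i<n. \<sigma> i * v a i) / n))
      \<le> (\<Sum>\<sigma>\<in>PS. ((\<Sum>i<n. \<sigma> i * t0 i) + (\<Sum>j<K. M j \<sigma>) + n * eK) / n)"
    by (intro sum_mono sup)
  also have "\<dots> = ((\<Sum>\<sigma>\<in>PS. \<Sum>i<n. \<sigma> i * t0 i) + (\<Sum>j<K. \<Sum>\<sigma>\<in>PS. M j \<sigma>) + card PS * (n * eK)) / n"
    unfolding sw[symmetric] by (simp add: sum_divide_distrib[symmetric] sum.distrib)
  also have "\<dots> = ((\<Sum>j<K. \<Sum>\<sigma>\<in>PS. M j \<sigma>) + 2 ^ n * (n * eK)) / n"
    using zero unfolding PS_def by (simp add: card_signs)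
  finally have "(\<Sum>\<sigma>\<in>PS. (SUP a\<in>A. (\<Sum>i<n. \<sigma> i * v a i) / n)) / 2 ^ n
      \<le> ((\<Sum>j<K. \<Sum>\<sigma>\<in>PS. M j \<sigma>) + 2 ^ n * (n * eK)) / n / 2 ^ n"
    by (rule divide_right_mono) simp
  also have "\<dots> = eK + (\<Sum>j<K. (\<Sum>\<sigma>\<in>PS. M j \<sigma>) / 2 ^ n / n)"
  proof -
    have gen: "(S + 2 ^ n * (n * eK)) / n / 2 ^ n = eK + S / 2 ^ n / n" for S :: real
      using n by (simp add: field_simps)
    have "(\<Sum>j<K. (\<Sum>\<sigma>\<in>PS. M j \<sigma>) / 2 ^ n / n) = (\<Sum>j<K. \<Sum>\<sigma>\<in>PS. M j \<sigma>) / 2 ^ n / n"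
      by (simp only: sum_divide_distrib)
    thus ?thesis by (simp only: gen)
  qed
  also have "\<dots> \<le> eK + (\<Sum>j<K. 3 * (D / 2 ^ Suc j) * sqrt (2 * ln (real (card (C (Suc j)) * card (C j)))) / sqrt n)"
  proof (intro add_left_mono sum_mono)
    fix j
    have "(\<Sum>\<sigma>\<in>PS. M j \<sigma>) / 2 ^ n / n \<le> sqrt n * (3 * (D / 2 ^ Suc j)) * sqrt (2 * ln (card (L j))) / n"
      using n by (intro divide_right_mono Mavg) auto
    also have "\<dots> \<le> sqrt n * (3 * (D / 2 ^ Suc j)) * sqrt (2 * ln (real (card (C (Suc j)) * card (C j)))) / n"
    proof -
      have "ln (card (L j)) \<le> ln (real (card (C (Suc j)) * card (C j)))"
      proof (rule ln_mono)
        show "real (card (L j)) \<le> real (card (C (Suc j)) * card (C j))"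
          using Lcard[of j] by (simp only: of_nat_le_iff)
        show "0 < real (card (L j))" using Lcard1[of j] by simp
      qed
      thus ?thesis using D n
        by (intro divide_right_mono mult_left_mono real_sqrt_le_mono) auto
    qed
    also have "\<dots> = 3 * (D / 2 ^ Suc j) * sqrt (2 * ln (real (card (C (Suc j)) * card (C j)))) / sqrt n"
      by (subst mult.assoc, rule sqrt_div_helper) (use n in simp)
    finally show "(\<Sum>\<sigma>\<in>PS. M j \<sigma>) / 2 ^ n / n \<le> 3 * (D / 2 ^ Suc j) * sqrt (2 * ln (real (card (C (Suc j)) * card (C j)))) / sqrt n" .
  qed
  finally show ?thesis unfolding PS_def eK_def .
qed



lemma emp_dist_sum_le:
  fixes f g :: "'x \<Rightarrow> real" and \<rho> :: real
  assumes "emp_dist S f g \<le> \<rho>" "length S > 0"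
  shows "(\<Sum>i<length S. (f (fst (S!i)) - g (fst (S!i)))\<^sup>2) \<le> length S * \<rho>\<^sup>2"
proof -
  have "(\<Sum>i<length S. (f (fst (S!i)) - g (fst (S!i)))\<^sup>2) / length S \<le> \<rho>\<^sup>2"
    using assms(1) unfolding emp_dist_def by (rule sqrt_le_D)
  thus ?thesis using assms(2) by (simp add: field_simps)
qed

lemma emp_dist_le_of_pointwise:
  fixes f g :: "'x \<Rightarrow> real" and \<rho> :: real
  assumes "\<rho> \<ge> 0" "\<And>i. i < length S \<Longrightarrow> (f (fst (S!i)) - g (fst (S!i)))\<^sup>2 \<le> \<rho>\<^sup>2"
  shows "emp_dist S f g \<le> \<rho>"
proof -
  have "(\<Sum>i<length S. (f (fst (S!i)) - g (fst (S!i)))\<^sup>2) \<le> (\<Sum>i<length S. \<rho>\<^sup>2)"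
    using assms(2) by (intro sum_mono) auto
  hence "(\<Sum>i<length S. (f (fst (S!i)) - g (fst (S!i)))\<^sup>2) / length S \<le> \<rho>\<^sup>2"
    by (cases "length S = 0") (auto simp: field_simps)
  hence "emp_dist S f g \<le> sqrt (\<rho>\<^sup>2)" unfolding emp_dist_def by (rule real_sqrt_le_mono)
  thus ?thesis using assms(1) by simp
qed

lemma grid_cover:
  fixes F :: "('x \<Rightarrow> real) set" and S :: "('x \<times> real) list"
  assumes rho: "\<rho> > 0" and F: "\<forall>f\<in>F. \<forall>x. f x \<in> {0..1}"
  shows "\<exists>C. finite C \<and> is_cover F \<rho> S C"
proof -
  obtain m :: nat where m: "1 / \<rho> < m" using reals_Archimedean2 by blast
  have "0 < 1 / \<rho>" using rho by simp
  hence "0 < real m" using m by linarith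
  hence mpos: "m > 0" by simp
  have minv: "1 / real m \<le> \<rho>" using m rho mpos by (simp add: field_simps)
  define X where "X = fst ` set S"
  define Q where "Q = (\<lambda>f. restrict (\<lambda>x. real_of_int \<lfloor>real m * f x\<rfloor> / m) X)"
  define V where "V = (\<lambda>k. real_of_int k / m) ` {0..int m}"
  have sub: "Q ` F \<subseteq> X \<rightarrow>\<^sub>E V"
  proof
    fix g assume "g \<in> Q ` F"
    then obtain f where f: "f \<in> F" "g = Q f" by auto
    have "real_of_int \<lfloor>real m * f x\<rfloor> / m \<in> V" for x
    proof -
      have "0 \<le> f x" "f x \<le> 1" using F f(1) by auto
      hence "0 \<le> real m * f x" "real m * f x \<le> real m" using mpos by (auto simp: mult_left_le)
      hence "0 \<le> \<lfloor>real m * f x\<rfloor>" "\<lfloor>real m * f x\<rfloor> \<le> int m"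
        by (simp_all add: floor_le_iff)
      hence "\<lfloor>real m * f x\<rfloor> \<in> {0..int m}" by simp
      thus ?thesis unfolding V_def by auto
    qed
    thus "g \<in> X \<rightarrow>\<^sub>E V" unfolding f(2) Q_def by auto
  qed
  have fin: "finite (Q ` F)"
    by (rule finite_subset[OF sub], rule finite_PiE) (auto simp: X_def V_def)
  have "is_cover F \<rho> S (Q ` F)"
    unfolding is_cover_def
  proof
    fix f assume f: "f \<in> F"
    have "emp_dist S f (Q f) \<le> \<rho>"
    proof (rule emp_dist_le_of_pointwise)
      show "\<rho> \<ge> 0" using rho by simp
      fix i assume i: "i < length S"
      define x where "x = fst (S!i)"
      have xX: "x \<in> X" unfolding X_def x_def using i by auto
      have "Q f x = real_of_int \<lfloor>real m * f x\<rfloor> / m" using xX unfolding Q_def by simp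
      moreover have "\<bar>f x - real_of_int \<lfloor>real m * f x\<rfloor> / m\<bar> \<le> 1 / m"
      proof -
        have a: "real_of_int \<lfloor>real m * f x\<rfloor> \<le> real m * f x" by linarith
        have b: "real m * f x < real_of_int \<lfloor>real m * f x\<rfloor> + 1" by linarith
        have "f x - real_of_int \<lfloor>real m * f x\<rfloor> / m = (real m * f x - real_of_int \<lfloor>real m * f x\<rfloor>) / m"
          using mpos by (simp add: field_simps)
        moreover have "0 \<le> (real m * f x - real_of_int \<lfloor>real m * f x\<rfloor>) / m" using a mpos by simp
        moreover have "(real m * f x - real_of_int \<lfloor>real m * f x\<rfloor>) / m \<le> 1 / m"
          by (intro divide_right_mono) (use b in linarith, simp)
        ultimately show ?thesis by simp
      qed
      ultimately have "\<bar>f x - Q f x\<bar> \<le> \<rho>" using minv by simp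
      hence "(f x - Q f x)\<^sup>2 \<le> \<rho>\<^sup>2" using rho by (metis abs_le_square_iff abs_of_pos)
      thus "(f (fst (S!i)) - Q f (fst (S!i)))\<^sup>2 \<le> \<rho>\<^sup>2" unfolding x_def .
    qed
    thus "\<exists>c\<in>Q ` F. emp_dist S f c \<le> \<rho>" using f by blast
  qed
  thus ?thesis using fin by blast
qed

lemma cov_min:
  assumes "\<rho> > 0" "\<forall>f\<in>F. \<forall>x. f x \<in> {0..1}"
  shows "\<exists>C. finite C \<and> card C = covering_number F \<rho> S \<and> is_cover F \<rho> S C"
proof -
  obtain C where "finite C" "is_cover F \<rho> S C" using grid_cover[OF assms] by blast
  hence "\<exists>k C. finite C \<and> card C = k \<and> is_cover F \<rho> S C" by blast
  thus ?thesis unfolding covering_number_def by (rule LeastI_ex)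
qed

lemma cov_le:
  assumes "finite C" "is_cover F \<rho> S C"
  shows "covering_number F \<rho> S \<le> card C"
  unfolding covering_number_def using assms by (intro Least_le) blast

lemma cov_mono:
  assumes "0 < \<rho>" "\<rho> \<le> \<rho>'" "\<forall>f\<in>F. \<forall>x. f x \<in> {0..1}"
  shows "covering_number F \<rho>' S \<le> covering_number F \<rho> S"
proof -
  obtain C where C: "finite C" "card C = covering_number F \<rho> S" "is_cover F \<rho> S C"
    using cov_min[OF assms(1,3)] by blast
  have "is_cover F \<rho>' S C" using C(3) assms(2) unfolding is_cover_def by (meson order_trans)
  thus ?thesis using cov_le[OF C(1)] C(2) by simp
qed

lemma cov_pos:
  assumes "0 < \<rho>" "\<forall>f\<in>F. \<forall>x. f x \<in> {0..1}" "F \<noteq> {}"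
  shows "covering_number F \<rho> S \<ge> 1"
proof -
  obtain C where C: "finite C" "card C = covering_number F \<rho> S" "is_cover F \<rho> S C"
    using cov_min[OF assms(1,2)] by blast
  have "C \<noteq> {}" using C(3) assms(3) unfolding is_cover_def by blast
  hence "card C > 0" using C(1) by (simp add: card_gt_0_iff)
  thus ?thesis using C(2) by simp
qed

lemma loss_lip:
  fixes f h y :: real
  assumes "f \<in> {0..1}" "h \<in> {0..1}" "y \<in> {0..1}"
  shows "((f - y)\<^sup>2 - (h - y)\<^sup>2)\<^sup>2 \<le> 4 * (f - h)\<^sup>2"
proof -
  have "((f - y)\<^sup>2 - (h - y)\<^sup>2) = (f - h) * (f + h - 2 * y)" by (simp add: power2_eq_square algebra_simps)
  hence "((f - y)\<^sup>2 - (h - y)\<^sup>2)\<^sup>2 = (f - h)\<^sup>2 * (f + h - 2 * y)\<^sup>2" by (simp add: power_mult_distrib)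
  also have "(f + h - 2 * y)\<^sup>2 \<le> 4"
  proof -
    have "\<bar>f + h - 2 * y\<bar> \<le> 2" using assms by auto
    hence "\<bar>f + h - 2 * y\<bar>\<^sup>2 \<le> 2\<^sup>2" by (intro power_mono) auto
    thus ?thesis by simp
  qed
  hence "(f - h)\<^sup>2 * (f + h - 2 * y)\<^sup>2 \<le> (f - h)\<^sup>2 * 4" by (intro mult_left_mono) auto
  finally show ?thesis by simp
qed

definition clip :: "real \<Rightarrow> real" where "clip t = max 0 (min 1 t)"

lemma clip_in: "clip t \<in> {0..1}" unfolding clip_def by auto

lemma clip_close: "f \<in> {0..1} \<Longrightarrow> (f - clip g)\<^sup>2 \<le> (f - g)\<^sup>2"
proof -
  assume f: "f \<in> {0..1}"
  have "\<bar>f - clip g\<bar> \<le> \<bar>f - g\<bar>"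
  proof (cases "g < 0")
    case True thus ?thesis using f unfolding clip_def by auto
  next
    case False
    thus ?thesis
    proof (cases "g > 1")
      case True thus ?thesis using f unfolding clip_def by auto
    next
      case False
      hence "clip g = g" using \<open>\<not> g < 0\<close> unfolding clip_def by auto
      thus ?thesis by simp
    qed
  qed
  thus ?thesis by (simp only: abs_le_square_iff)
qed



lemma pow_div_anti:
  fixes \<gamma> :: real assumes "\<gamma> > 0" "j \<le> k"
  shows "\<gamma> / 2 ^ k \<le> \<gamma> / 2 ^ j"
  using assms by (intro divide_left_mono power_increasing) auto

lemma step_integral:
  fixes g :: "real \<Rightarrow> real" and \<gamma> :: real and K :: nat
  assumes gam: "\<gamma> > 0"
    and anti: "\<And>a b. 0 < a \<Longrightarrow> a \<le> b \<Longrightarrow> g b \<le> g a"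
    and nonneg: "\<And>x. 0 < x \<Longrightarrow> 0 \<le> g x"
  shows "ennreal (\<Sum>j<K. (\<gamma> / 2 ^ Suc j - \<gamma> / 2 ^ Suc (Suc j)) * g (\<gamma> / 2 ^ Suc j))
         \<le> (\<integral>\<^sup>+ x. ennreal (g x) * indicator {0..\<gamma>} x \<partial>lborel)"
proof -
  define a where "a = (\<lambda>j::nat. \<gamma> / 2 ^ Suc (Suc j))"
  define b where "b = (\<lambda>j::nat. \<gamma> / 2 ^ Suc j)"
  have apos: "0 < a j" for j unfolding a_def using gam by simp
  have ab: "a j < b j" for j unfolding a_def b_def using gam by (simp add: field_simps)
  have bg: "b j \<le> \<gamma>" for j unfolding b_def using gam by (simp add: field_simps) (metis one_le_power one_le_numeral mult_le_cancel_left1 order_trans le_add_same_cancel1 mult_2 zero_le_power zero_le_numeral)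
  have disj: "b k \<le> a j" if "j < k" for j k
    unfolding a_def b_def using gam that by (intro pow_div_anti) auto
  define s where "s = (\<lambda>x. \<Sum>j<K. ennreal (g (b j)) * indicator {a j<..b j} x)"
  have "(\<integral>\<^sup>+ x. s x \<partial>lborel) = (\<Sum>j<K. ennreal (g (b j)) * emeasure lborel {a j<..b j})"
    unfolding s_def by (subst nn_integral_sum) (auto simp: nn_integral_cmult_indicator)
  also have "\<dots> = (\<Sum>j<K. ennreal (g (b j)) * ennreal (b j - a j))"
    using ab by (intro sum.cong refl) (simp add: less_imp_le)
  also have "\<dots> = ennreal (\<Sum>j<K. (b j - a j) * g (b j))"
  proof -
    have "(\<Sum>j<K. ennreal (g (b j)) * ennreal (b j - a j)) = (\<Sum>j<K. ennreal ((b j - a j) * g (b j)))"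
      using ab nonneg[OF less_trans[OF apos ab]]
      by (intro sum.cong refl) (simp add: ennreal_mult'' mult.commute less_imp_le)
    also have "\<dots> = ennreal (\<Sum>j<K. (b j - a j) * g (b j))"
      using ab nonneg[OF less_trans[OF apos ab]] by (intro sum_ennreal) (simp add: less_imp_le)
    finally show ?thesis .
  qed
  finally have eq: "(\<integral>\<^sup>+ x. s x \<partial>lborel) = ennreal (\<Sum>j<K. (b j - a j) * g (b j))" .
  have pw: "s x \<le> ennreal (g x) * indicator {0..\<gamma>} x" for x
  proof (cases "\<exists>j<K. x \<in> {a j<..b j}")
    case True
    then obtain j where j: "j < K" "x \<in> {a j<..b j}" by blast
    have other: "indicator {a k<..b k} x = (0::ennreal)" if "k < K" "k \<noteq> j" for k
    proof -
      have "x \<notin> {a k<..b k}"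
      proof
        assume xk: "x \<in> {a k<..b k}"
        show False
        proof (cases "j < k")
          case True thus False using disj[OF True] xk j(2) by auto
        next
          case False hence "k < j" using that by auto
          thus False using disj[of k j] xk j(2) by auto
        qed
      qed
      thus ?thesis by simp
    qed
    have "s x = ennreal (g (b j)) * indicator {a j<..b j} x + (\<Sum>k\<in>{..<K} - {j}. ennreal (g (b k)) * indicator {a k<..b k} x)"
      unfolding s_def using j(1) by (subst sum.remove[of _ j]) auto
    also have "(\<Sum>k\<in>{..<K} - {j}. ennreal (g (b k)) * indicator {a k<..b k} x) = 0"
      using other by (intro sum.neutral) auto
    also have "ennreal (g (b j)) * indicator {a j<..b j} x = ennreal (g (b j))" using j(2) by simp
    also have "g (b j) \<le> g x" using j(2) apos[of j] by (intro anti) auto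
    hence "ennreal (g (b j)) \<le> ennreal (g x)" by (rule ennreal_leI)
    also have "ennreal (g x) = ennreal (g x) * indicator {0..\<gamma>} x"
      using j(2) apos[of j] bg[of j] by auto
    finally show ?thesis by simp
  next
    case False
    hence "s x = 0" unfolding s_def by (intro sum.neutral) auto
    thus ?thesis by simp
  qed
  have "ennreal (\<Sum>j<K. (b j - a j) * g (b j)) \<le> (\<integral>\<^sup>+ x. ennreal (g x) * indicator {0..\<gamma>} x \<partial>lborel)"
    unfolding eq[symmetric] by (intro nn_integral_mono pw)
  thus ?thesis unfolding a_def b_def .
qed



lemma limit_arg:
  fixes R B c :: real
  assumes "c > 0" "\<And>K::nat. R \<le> c / 2 ^ K + B"
  shows "R \<le> B"
proof (rule ccontr)
  assume "\<not> R \<le> B"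
  hence d: "R - B > 0" by simp
  obtain K :: nat where K: "c / (R - B) < 2 ^ K" using real_arch_pow[of 2 "c / (R - B)"] by auto
  hence "c < 2 ^ K * (R - B)" using d by (simp add: field_simps)
  hence "c / 2 ^ K < R - B" by (simp add: field_simps)
  thus False using assms(2)[of K] by simp
qed

theorem lemma6:
  fixes F :: "('x \<Rightarrow> real) set" and n :: nat and rs \<gamma> :: real
    and S' :: "('x \<times> real) list" and c :: "'x \<Rightarrow> real"
  assumes "n > 0"
    and "\<forall>f\<in>F. \<forall>x. f x \<in> {0..1}"
    and "loc_radius n {(\<lambda>z. (f (fst z) - g (fst z))\<^sup>2) | f g. f \<in> F \<and> g \<in> F} rs"
    and "sample_in_Z n S'"
    and "c \<in> F"
    and "\<gamma> > 0" and "\<gamma> \<ge> sqrt rs"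
  shows "ennreal (emp_rademacher (loss_class {f\<in>F. emp_dist S' f c \<le> \<gamma>}) S')
     \<le> ennreal (\<gamma> * sqrt rs) + ennreal (24 / sqrt n) *
        (\<integral>\<^sup>+ \<rho>. ennreal (sqrt (ln (covering_number F \<rho> S'))) * indicator {0..\<gamma>} \<rho> \<partial>lborel)"
proof -
  note npos = assms(1) and Fb = assms(2) and cF = assms(5) and gam = assms(6)
  have len: "length S' = n" and ysZ: "\<forall>z\<in>set S'. snd z \<in> {0..1}"
    using assms(4) unfolding sample_in_Z_def by auto
  define x where "x = (\<lambda>i. fst (S' ! i))"
  define y where "y = (\<lambda>i. snd (S' ! i))"
  have y01: "y i \<in> {0..1}" if "i < n" for i
    using ysZ that len unfolding y_def by auto
  define A where "A = {f\<in>F. emp_dist S' f c \<le> \<gamma>}"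
  define v where "v = (\<lambda>f i. (f (x i) - y i)\<^sup>2)"
  define N where "N = (\<lambda>r. covering_number F r S')"
  define rr where "rr = (\<lambda>j::nat. \<gamma> / 2 ^ j)"
  have rrpos: "rr j > 0" for j unfolding rr_def using gam by simp
  have Npos: "N r \<ge> 1" if "r > 0" for r unfolding N_def using cov_pos[OF that Fb] cF by blast
  have Nmono: "N b \<le> N a" if "0 < a" "a \<le> b" for a b unfolding N_def using cov_mono[OF that Fb] .
  define Cf where "Cf = (\<lambda>j. SOME C. finite C \<and> card C = N (rr j) \<and> is_cover F (rr j) S' C)"
  have Cf: "finite (Cf j) \<and> card (Cf j) = N (rr j) \<and> is_cover F (rr j) S' (Cf j)" for j
  proof -
    have ex: "\<exists>C. finite C \<and> card C = N (rr j) \<and> is_cover F (rr j) S' C"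
      unfolding N_def by (rule cov_min[OF rrpos Fb])
    show ?thesis unfolding Cf_def by (rule someI_ex[OF ex])
  qed
  define C where "C = (\<lambda>j. if j = 0 then {v c} else (\<lambda>g i. (clip (g (x i)) - y i)\<^sup>2) ` Cf j)"
  have cA: "c \<in> A" unfolding A_def emp_dist_def using cF gam by simp
  have Cfin: "finite (C j)" for j unfolding C_def using Cf by auto
  have cov: "\<exists>cc\<in>C j. (\<Sum>i<n. (v a i - cc i)\<^sup>2) \<le> n * ((2 * \<gamma>) / 2 ^ j)\<^sup>2" if aA: "a \<in> A" for j a
  proof (cases "j = 0")
    case True
    have aF: "a \<in> F" and ad: "emp_dist S' a c \<le> \<gamma>" using aA unfolding A_def by auto
    have "(\<Sum>i<n. (v a i - v c i)\<^sup>2) \<le> (\<Sum>i<n. 4 * (a (x i) - c (x i))\<^sup>2)"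
      unfolding v_def using Fb aF cF y01 by (intro sum_mono loss_lip) auto
    also have "\<dots> = 4 * (\<Sum>i<length S'. (a (fst (S'!i)) - c (fst (S'!i)))\<^sup>2)"
      unfolding x_def len by (simp add: sum_distrib_left)
    also have "\<dots> \<le> 4 * (length S' * \<gamma>\<^sup>2)"
      using emp_dist_sum_le[OF ad] len npos by simp
    also have "\<dots> = n * ((2 * \<gamma>) / 2 ^ j)\<^sup>2" using True len by (simp add: power2_eq_square)
    finally show ?thesis unfolding C_def using True by simp
  next
    case False
    have aF: "a \<in> F" using aA unfolding A_def by auto
    obtain g where g: "g \<in> Cf j" "emp_dist S' a g \<le> rr j"
      using Cf[of j] aF unfolding is_cover_def by blast
    have "(\<Sum>i<n. (v a i - (clip (g (x i)) - y i)\<^sup>2)\<^sup>2) \<le> (\<Sum>i<n. 4 * (a (x i) - g (x i))\<^sup>2)"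
    proof (intro sum_mono)
      fix i assume i: "i \<in> {..<n}"
      have "(v a i - (clip (g (x i)) - y i)\<^sup>2)\<^sup>2 \<le> 4 * (a (x i) - clip (g (x i)))\<^sup>2"
        unfolding v_def using Fb aF y01 i clip_in by (intro loss_lip) auto
      also have "\<dots> \<le> 4 * (a (x i) - g (x i))\<^sup>2"
        using clip_close[of "a (x i)" "g (x i)"] Fb aF by auto
      finally show "(v a i - (clip (g (x i)) - y i)\<^sup>2)\<^sup>2 \<le> 4 * (a (x i) - g (x i))\<^sup>2" .
    qed
    also have "\<dots> = 4 * (\<Sum>i<length S'. (a (fst (S'!i)) - g (fst (S'!i)))\<^sup>2)"
      unfolding x_def len by (simp add: sum_distrib_left)
    also have "\<dots> \<le> 4 * (length S' * (rr j)\<^sup>2)"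
      using emp_dist_sum_le[OF g(2)] len npos by simp
    also have "\<dots> = n * ((2 * \<gamma>) / 2 ^ j)\<^sup>2" using len unfolding rr_def by (simp add: power2_eq_square)
    finally have "(\<Sum>i<n. (v a i - (clip (g (x i)) - y i)\<^sup>2)\<^sup>2) \<le> n * ((2 * \<gamma>) / 2 ^ j)\<^sup>2" .
    moreover have "(\<lambda>i. (clip (g (x i)) - y i)\<^sup>2) \<in> C j" unfolding C_def using False g(1) by auto
    ultimately show ?thesis by (intro bexI[where x="\<lambda>i. (clip (g (x i)) - y i)\<^sup>2"]) simp_all
  qed
  have main: "emp_rademacher (loss_class A) S' \<le> (2 * \<gamma>) / 2 ^ K
      + (\<Sum>j<K. 3 * ((2 * \<gamma>) / 2 ^ Suc j) * sqrt (2 * ln (real (card (C (Suc j)) * card (C j)))) / sqrt n)" for K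
  proof -
    have eq: "emp_rademacher (loss_class A) S' =
      (\<Sum>\<sigma>\<in>{..<n} \<rightarrow>\<^sub>E {-1::real, 1}. (SUP a\<in>A. (\<Sum>i<n. \<sigma> i * v a i) / n)) / 2 ^ n"
      unfolding emp_rademacher_def loss_class_def len
      by (simp add: image_image v_def x_def y_def case_prod_unfold)
    show ?thesis unfolding eq
      by (rule chaining[OF npos _ _ _ Cfin cov]) (use cA gam in \<open>auto simp: C_def\<close>)
  qed
  define T where "T = (\<lambda>K. \<Sum>j<K. (\<gamma> / 2 ^ Suc j - \<gamma> / 2 ^ Suc (Suc j)) * sqrt (ln (real (N (\<gamma> / 2 ^ Suc j)))))"
  have termb: "3 * ((2 * \<gamma>) / 2 ^ Suc j) * sqrt (2 * ln (real (card (C (Suc j)) * card (C j)))) / sqrt n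
      \<le> 24 / sqrt n * ((\<gamma> / 2 ^ Suc j - \<gamma> / 2 ^ Suc (Suc j)) * sqrt (ln (real (N (\<gamma> / 2 ^ Suc j)))))" for j
  proof -
    define M where "M = N (\<gamma> / 2 ^ Suc j)"
    have M1: "M \<ge> 1" unfolding M_def using gam by (intro Npos) simp
    have c1: "card (C (Suc j)) \<le> M"
    proof -
      have fin: "finite (Cf (Suc j))" using Cf by blast
      have "card (C (Suc j)) \<le> card (Cf (Suc j))" unfolding C_def using card_image_le[OF fin] by simp
      thus ?thesis using Cf[of "Suc j"] unfolding M_def rr_def by simp
    qed
    have c2: "card (C j) \<le> M"
    proof (cases "j = 0")
      case True thus ?thesis using M1 unfolding C_def by simp
    next
      case False
      have fin: "finite (Cf j)" using Cf by blast
      have "card (C j) \<le> card (Cf j)" unfolding C_def using card_image_le[OF fin] False by simp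
      also have "\<dots> = N (rr j)" using Cf by simp
      also have "\<dots> \<le> M" unfolding M_def rr_def using gam pow_div_anti[OF gam, of j "Suc j"] by (intro Nmono) auto
      finally show ?thesis .
    qed
    have p: "card (C (Suc j)) * card (C j) \<le> M * M" using c1 c2 by (intro mult_le_mono)
    have lnM: "ln (real M) \<ge> 0" using M1 by simp
    have "ln (real (card (C (Suc j)) * card (C j))) \<le> 2 * ln (real M)"
    proof (cases "card (C (Suc j)) * card (C j) = 0")
      case True
      have "real (card (C (Suc j)) * card (C j)) = 0" using True by (simp only: of_nat_0)
      thus ?thesis using lnM by (metis ln_0 mult_nonneg_nonneg zero_le_numeral)
    next
      case False
      have "ln (real (card (C (Suc j)) * card (C j))) \<le> ln (real (M * M))"
      proof (rule ln_mono)
        show "real (card (C (Suc j)) * card (C j)) \<le> real (M * M)" using p by (simp only: of_nat_le_iff)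
        show "0 < real (card (C (Suc j)) * card (C j))" using False by (metis of_nat_0_less_iff gr0I)
      qed
      also have "\<dots> = 2 * ln (real M)" using M1 by (simp add: ln_mult)
      finally show ?thesis .
    qed
    hence "sqrt (2 * ln (real (card (C (Suc j)) * card (C j)))) \<le> sqrt (4 * ln (real M))" by simp
    also have "\<dots> = 2 * sqrt (ln (real M))" by (simp add: real_sqrt_mult)
    finally have s: "sqrt (2 * ln (real (card (C (Suc j)) * card (C j)))) \<le> 2 * sqrt (ln (real M))" .
    have "3 * ((2 * \<gamma>) / 2 ^ Suc j) * sqrt (2 * ln (real (card (C (Suc j)) * card (C j)))) / sqrt n
        \<le> 3 * ((2 * \<gamma>) / 2 ^ Suc j) * (2 * sqrt (ln (real M))) / sqrt n"
      using s gam by (intro divide_right_mono mult_left_mono) auto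
    also have "\<dots> = 24 / sqrt n * ((\<gamma> / 2 ^ Suc j - \<gamma> / 2 ^ Suc (Suc j)) * sqrt (ln (real M)))"
      by (simp add: field_simps)
    finally show ?thesis unfolding M_def .
  qed
  have main2: "emp_rademacher (loss_class A) S' \<le> (2 * \<gamma>) / 2 ^ K + 24 / sqrt n * T K" for K
  proof -
    have "(\<Sum>j<K. 3 * ((2 * \<gamma>) / 2 ^ Suc j) * sqrt (2 * ln (real (card (C (Suc j)) * card (C j)))) / sqrt n)
        \<le> (\<Sum>j<K. 24 / sqrt n * ((\<gamma> / 2 ^ Suc j - \<gamma> / 2 ^ Suc (Suc j)) * sqrt (ln (real (N (\<gamma> / 2 ^ Suc j))))))"
      by (intro sum_mono termb)
    also have "\<dots> = 24 / sqrt n * T K" unfolding T_def by (simp add: sum_distrib_left)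
    finally show ?thesis using main[of K] by simp
  qed
  define Ie where "Ie = (\<integral>\<^sup>+ \<rho>. ennreal (sqrt (ln (covering_number F \<rho> S'))) * indicator {0..\<gamma>} \<rho> \<partial>lborel)"
  have TIe: "ennreal (T K) \<le> Ie" for K
    unfolding T_def Ie_def N_def
  proof (rule step_integral[OF gam])
    fix a b :: real assume ab: "0 < a" "a \<le> b"
    have "N b \<le> N a" by (rule Nmono[OF ab])
    moreover have "N b \<ge> 1" using ab by (intro Npos) simp
    ultimately have "ln (real (N b)) \<le> ln (real (N a))" by (intro ln_mono) auto
    thus "sqrt (ln (real (covering_number F b S'))) \<le> sqrt (ln (real (covering_number F a S')))"
      unfolding N_def by simp
  next
    fix r :: real assume "0 < r"
    hence "N r \<ge> 1" by (intro Npos)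
    thus "0 \<le> sqrt (ln (real (covering_number F r S')))" unfolding N_def by simp
  qed
  have cpos: "24 / sqrt n > 0" using npos by simp
  show ?thesis
  proof (cases "Ie = top")
    case True
    have "ennreal (24 / sqrt n) * Ie = top" using True cpos by (simp add: ennreal_mult_top)
    thus ?thesis unfolding Ie_def[symmetric] by simp
  next
    case False
    then obtain I where I: "Ie = ennreal I" "I \<ge> 0" by (cases Ie) auto
    have TI: "T K \<le> I" for K using TIe[of K] I by (simp add: ennreal_le_iff)
    have Rk: "emp_rademacher (loss_class A) S' \<le> (2 * \<gamma>) / 2 ^ K + 24 / sqrt n * I" for K
    proof -
      have "24 / sqrt n * T K \<le> 24 / sqrt n * I" using TI[of K] cpos by (intro mult_left_mono) auto
      thus ?thesis using main2[of K] by linarith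
    qed
    have R: "emp_rademacher (loss_class A) S' \<le> 24 / sqrt n * I"
      by (rule limit_arg[OF _ Rk]) (use gam in simp)
    have "ennreal (emp_rademacher (loss_class A) S') \<le> ennreal (24 / sqrt n * I)"
      using R by (rule ennreal_leI)
    also have "\<dots> = ennreal (24 / sqrt n) * Ie" unfolding I(1) using cpos I(2) by (intro ennreal_mult) auto
    also have "\<dots> \<le> ennreal (\<gamma> * sqrt rs) + ennreal (24 / sqrt n) * Ie" by (intro add_increasing) auto
    finally show ?thesis unfolding A_def Ie_def .
  qed
qed


end
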